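(* Let $m\ge2$ and let $\mathfrak{h}_m$ be the Lie subalgebra of $\Lambda(\mathbb{Q}\mathrm{Tree}_2^-)$ generated by $\bigcup_{j=2}^m\mathrm{Tree}_2((j))$. Then the subspace $\mathbb{Q}\mathrm{Tree}_2^-((0))\oplus\mathbb{Q}\mathrm{Tree}_2^-((1))\oplus\mathfrak{h}_m$ is a Lie subalgebra of $\Lambda(\mathbb{Q}\mathrm{Tree}_2^-)$.
   Context: $\mathrm{Tree}_2((m))$, $m\ge1$, is the set of planar binary rooted trees with one root and $m$ leaves labeled $1,\dots,m$ from left to right, equivalently full parenthesizations of $12\cdots m$; $\mathrm{Tree}_2((1))=\{1\}$, $\mathrm{Tree}_2((2))=\{(12)\}$. Composition $S\circ_iT$ grafts the root of $T$ onto the $i$-th leaf of $S$. For $c\in\mathrm{Tree}_2((m))$, $m\ge2$, $\partial_ic\in\mathrm{Tree}_2((m-1))$ is obtained by erasing the $i$-th leaf (suppressing the resulting one-input vertex). The operad $\mathrm{Tree}_2^-$ has $\mathrm{Tree}_2^-((0))=\{\circ\}$, $\mathrm{Tree}_2^-((m))=\mathrm{Tree}_2((m))$ for $m\ge1$, grafting compositions, and $c\circ_i\circ=\partial_ic$, $1\circ_1\circ=\circ$. $\Lambda(\mathbb{Q}\mathrm{Tree}_2^-)=\bigoplus_{m\ge0}\mathbb{Q}\mathrm{Tree}_2^-((m))$ with Lie bracket $[c,d]=\sum_{t=1}^{j}d\circ_tc-\sum_{s=1}^{k}c\circ_sd$ for $c$ of arity $k$, $d$ of arity $j$. *)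

theory Defs
  imports Complex_Main "HOL-Library.Function_Algebras"
begin

text \<open>Planar binary rooted trees with leaves labelled 1..m from left to right.\<close>
datatype tree = Lf | Nd tree tree

fun leaves :: "tree \<Rightarrow> nat" where
  "leaves Lf = 1"
| "leaves (Nd l r) = leaves l + leaves r"

text \<open>Grafting the root of T onto the i-th leaf (1-indexed) of S.\<close>
fun graft :: "tree \<Rightarrow> nat \<Rightarrow> tree \<Rightarrow> tree" where
  "graft Lf i T = (if i = 1 then T else Lf)"
| "graft (Nd l r) i T =
     (if i \<le> leaves l then Nd (graft l i T) r else Nd l (graft r (i - leaves l) T))"

text \<open>Erasing the i-th leaf, suppressing the resulting one-input vertex.\<close>
fun erase :: "tree \<Rightarrow> nat \<Rightarrow> tree" where
  "erase Lf i = Lf"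
| "erase (Nd l r) i =
     (if i \<le> leaves l then (if l = Lf then r else Nd (erase l i) r)
      else (if r = Lf then l else Nd l (erase r (i - leaves l))))"

text \<open>Elements of the operad Tree_2^-: the arity-0 element Circ, or a tree.\<close>
datatype elem = Circ | Tr tree

fun arity :: "elem \<Rightarrow> nat" where
  "arity Circ = 0"
| "arity (Tr t) = leaves t"

text \<open>Partial composition c \<circ>_i d (meaningful for 1 \<le> i \<le> arity c).\<close>
fun comp :: "elem \<Rightarrow> nat \<Rightarrow> elem \<Rightarrow> elem" where
  "comp (Tr S) i (Tr T) = Tr (graft S i T)"
| "comp (Tr S) i Circ = (if S = Lf then Circ else Tr (erase S i))"
| "comp Circ i d = Circ"

text \<open>Vectors in Lambda(Q Tree_2^-): (finitely supported) rational coefficient functions.\<close>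
type_synonym vec = "elem \<Rightarrow> rat"

definition basis :: "elem \<Rightarrow> vec" where
  "basis x = (\<lambda>y. if y = x then 1 else 0)"

definition scal :: "rat \<Rightarrow> vec \<Rightarrow> vec" where
  "scal a v = (\<lambda>y. a * v y)"

definition supp :: "vec \<Rightarrow> elem set" where
  "supp v = {x. v x \<noteq> 0}"

definition basic_br :: "elem \<Rightarrow> elem \<Rightarrow> vec" where
  "basic_br c d = (\<Sum>t\<in>{1..arity d}. basis (comp d t c)) - (\<Sum>s\<in>{1..arity c}. basis (comp c s d))"

definition br :: "vec \<Rightarrow> vec \<Rightarrow> vec" where
  "br v w = (\<Sum>c\<in>supp v. \<Sum>d\<in>supp w. scal (v c * w d) (basic_br c d))"

inductive_set lie_gen :: "vec set \<Rightarrow> vec set" for S where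
  gen: "v \<in> S \<Longrightarrow> v \<in> lie_gen S"
| zero: "0 \<in> lie_gen S"
| add: "v \<in> lie_gen S \<Longrightarrow> w \<in> lie_gen S \<Longrightarrow> v + w \<in> lie_gen S"
| smult: "v \<in> lie_gen S \<Longrightarrow> scal a v \<in> lie_gen S"
| bracket: "v \<in> lie_gen S \<Longrightarrow> w \<in> lie_gen S \<Longrightarrow> br v w \<in> lie_gen S"

definition is_lie_subalgebra :: "vec set \<Rightarrow> bool" where
  "is_lie_subalgebra V \<longleftrightarrow> (\<forall>v\<in>V. finite (supp v)) \<and> 0 \<in> V \<and>
     (\<forall>v\<in>V. \<forall>w\<in>V. v + w \<in> V) \<and> (\<forall>a. \<forall>v\<in>V. scal a v \<in> V) \<and>
     (\<forall>v\<in>V. \<forall>w\<in>V. br v w \<in> V)"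

definition h :: "nat \<Rightarrow> vec set" where
  "h m = lie_gen {basis (Tr t) | t. 2 \<le> leaves t \<and> leaves t \<le> m}"

end

theory Submission
  imports Defs
begin


lemma leaves_pos[simp]: "leaves t \<ge> 1"
  by (induction t) auto

lemma leaves_ge2: "t \<noteq> Lf \<Longrightarrow> leaves t \<ge> 2"
proof (cases t)
  case (Nd a b) then show ?thesis using leaves_pos[of a] leaves_pos[of b] by simp
qed simp

lemma leaves_eq1: "leaves t = 1 \<longleftrightarrow> t = Lf"
  using leaves_ge2[of t] by (cases t) auto

lemma leaves_graft: "1 \<le> i \<Longrightarrow> i \<le> leaves S \<Longrightarrow> leaves (graft S i T) = leaves S + leaves T - 1"
proof (induction S arbitrary: i)
  case Lf then show ?case by simp
next
  case (Nd l r)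
  show ?case
  proof (cases "i \<le> leaves l")
    case True then show ?thesis using Nd.IH(1)[of i] Nd.prems leaves_pos[of r] leaves_pos[of T] by simp
  next
    case False then show ?thesis using Nd.IH(2)[of "i - leaves l"] Nd.prems leaves_pos[of l] leaves_pos[of T] by simp
  qed
qed

lemma leaves_erase: "S \<noteq> Lf \<Longrightarrow> 1 \<le> i \<Longrightarrow> i \<le> leaves S \<Longrightarrow> leaves (erase S i) = leaves S - 1"
proof (induction S arbitrary: i)
  case Lf then show ?case by simp
next
  case (Nd l r)
  show ?case
  proof (cases "i \<le> leaves l")
    case True then show ?thesis using Nd.IH(1)[of i] Nd.prems leaves_pos[of r] leaves_eq1[of l] leaves_pos[of l] by auto
  next
    case False then show ?thesis using Nd.IH(2)[of "i - leaves l"] Nd.prems leaves_pos[of l] leaves_eq1[of r] by auto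
  qed
qed

lemma graft_Lf: "graft S i Lf = S"
  by (induction S arbitrary: i) auto

lemma graft_eq_Lf: "1 \<le> i \<Longrightarrow> i \<le> leaves S \<Longrightarrow> graft S i T = Lf \<longleftrightarrow> S = Lf \<and> T = Lf"
  using leaves_graft[of i S T] leaves_eq1[of "graft S i T"] leaves_eq1[of S] leaves_eq1[of T]
    leaves_pos[of S] leaves_pos[of T]
  by (cases "S = Lf"; cases "T = Lf") auto

lemma graft_L: "i \<le> leaves l \<Longrightarrow> graft (Nd l r) i T = Nd (graft l i T) r" by simp
lemma graft_R: "\<not> i \<le> leaves l \<Longrightarrow> graft (Nd l r) i T = Nd l (graft r (i - leaves l) T)" by simp
lemma erase_L: "i \<le> leaves l \<Longrightarrow> l \<noteq> Lf \<Longrightarrow> erase (Nd l r) i = Nd (erase l i) r" by simp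
lemma erase_R: "\<not> i \<le> leaves l \<Longrightarrow> r \<noteq> Lf \<Longrightarrow> erase (Nd l r) i = Nd l (erase r (i - leaves l))" by simp
lemma erase_L1: "i \<le> leaves l \<Longrightarrow> l = Lf \<Longrightarrow> erase (Nd l r) i = r" by simp
lemma erase_R1: "\<not> i \<le> leaves l \<Longrightarrow> r = Lf \<Longrightarrow> erase (Nd l r) i = l" by simp

lemma E1: "1 \<le> t \<Longrightarrow> t \<le> leaves d \<Longrightarrow> 1 \<le> u \<Longrightarrow> u \<le> leaves c \<Longrightarrow> c \<noteq> Lf \<Longrightarrow>
  erase (graft d t c) (t - 1 + u) = graft d t (erase c u)"
proof (induction d arbitrary: t)
  case Lf then show ?case by simp
next
  case (Nd l r)
  show ?case
  proof (cases "t \<le> leaves l")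
    case True
    have ne: "graft l t c \<noteq> Lf" using graft_eq_Lf[of t l c] True Nd.prems by simp
    have le: "t - 1 + u \<le> leaves (graft l t c)" using leaves_graft[of t l c] True Nd.prems by simp
    have "erase (graft (Nd l r) t c) (t - 1 + u) = Nd (erase (graft l t c) (t - 1 + u)) r"
      using graft_L[OF True] erase_L[OF le ne] by simp
    also have "\<dots> = Nd (graft l t (erase c u)) r" using Nd.IH(1)[of t] True Nd.prems by simp
    also have "\<dots> = graft (Nd l r) t (erase c u)" using graft_L[OF True] by simp
    finally show ?thesis .
  next
    case False
    have ne: "graft r (t - leaves l) c \<noteq> Lf" using graft_eq_Lf[of "t - leaves l" r c] False Nd.prems by simp
    have e: "t - 1 + u - leaves l = t - leaves l - 1 + u" using False Nd.prems by simp
    have nle: "\<not> t - 1 + u \<le> leaves l" using False Nd.prems by simp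
    have "erase (graft (Nd l r) t c) (t - 1 + u) = Nd l (erase (graft r (t - leaves l) c) (t - leaves l - 1 + u))"
      using graft_R[OF False] erase_R[OF nle ne] e by simp
    also have "\<dots> = Nd l (graft r (t - leaves l) (erase c u))" using Nd.IH(2)[of "t - leaves l"] False Nd.prems by simp
    also have "\<dots> = graft (Nd l r) t (erase c u)" using graft_R[OF False] by simp
    finally show ?thesis .
  qed
qed

lemma E2: "1 \<le> u \<Longrightarrow> u < t \<Longrightarrow> t \<le> leaves d \<Longrightarrow>
  erase (graft d t c) u = graft (erase d u) (t - 1) c"
proof (induction d arbitrary: t u)
  case Lf then show ?case by simp
next
  case (Nd l r)
  show ?case
  proof (cases "t \<le> leaves l")
    case True
    have ne: "graft l t c \<noteq> Lf" using graft_eq_Lf[of t l c] True Nd.prems by auto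
    have lne: "l \<noteq> Lf" using True Nd.prems by auto
    have le1: "u \<le> leaves (graft l t c)" using leaves_graft[of t l c] True Nd.prems by simp
    have le2: "t - 1 \<le> leaves (erase l u)" using leaves_erase[of l u] lne True Nd.prems by simp
    have le3: "u \<le> leaves l" using True Nd.prems by simp
    have "erase (graft (Nd l r) t c) u = Nd (erase (graft l t c) u) r"
      using graft_L[OF True] erase_L[OF le1 ne] by simp
    also have "\<dots> = Nd (graft (erase l u) (t - 1) c) r" using Nd.IH(1)[of u t] True Nd.prems by simp
    also have "\<dots> = graft (erase (Nd l r) u) (t - 1) c" using erase_L[OF le3 lne] graft_L[OF le2] by simp
    finally show ?thesis .
  next
    case False
    show ?thesis
    proof (cases "u \<le> leaves l")
      case True
      show ?thesis
      proof (cases "l = Lf")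
        case lf: True
        have "t - 1 = t - leaves l" using lf by simp
        then show ?thesis using erase_L1[OF True lf] graft_R[OF False] erase_L1[of u l] lf True by simp
      next
        case lne: False
        have lv: "leaves (erase l u) = leaves l - 1" using leaves_erase[of l u] lne True Nd.prems by simp
        have e: "t - 1 - (leaves l - 1) = t - leaves l" using False leaves_pos[of l] by linarith
        have nle: "\<not> t - 1 \<le> leaves (erase l u)" using lv False leaves_pos[of l] by linarith
        have "erase (graft (Nd l r) t c) u = Nd (erase l u) (graft r (t - leaves l) c)"
          using graft_R[OF False] erase_L[OF True lne] by simp
        also have "\<dots> = graft (erase (Nd l r) u) (t - 1) c"
          using erase_L[OF True lne] graft_R[OF nle] lv e by simp
        finally show ?thesis .
      qed
    next
      case uf: False
      have ne: "graft r (t - leaves l) c \<noteq> Lf"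
        using graft_eq_Lf[of "t - leaves l" r c] False uf Nd.prems by auto
      have rne: "r \<noteq> Lf" using False uf Nd.prems by auto
      have nle: "\<not> t - 1 \<le> leaves l" using uf Nd.prems by simp
      have e: "t - leaves l - 1 = t - 1 - leaves l" by simp
      have "erase (graft (Nd l r) t c) u = Nd l (erase (graft r (t - leaves l) c) (u - leaves l))"
        using graft_R[OF False] erase_R[OF uf ne] by simp
      also have "\<dots> = Nd l (graft (erase r (u - leaves l)) (t - leaves l - 1) c)"
        using Nd.IH(2)[of "u - leaves l" "t - leaves l"] False uf Nd.prems by simp
      also have "\<dots> = graft (erase (Nd l r) u) (t - 1) c"
        using erase_R[OF uf rne] graft_R[OF nle] e by simp
      finally show ?thesis .
    qed
  qed
qed

lemma E3: "1 \<le> t \<Longrightarrow> t < u \<Longrightarrow> u \<le> leaves d \<Longrightarrow>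
  erase (graft d t c) (u + leaves c - 1) = graft (erase d u) t c"
proof (induction d arbitrary: t u)
  case Lf then show ?case by simp
next
  case (Nd l r)
  show ?case
  proof (cases "u \<le> leaves l")
    case True
    have tl: "t \<le> leaves l" using True Nd.prems by simp
    have ne: "graft l t c \<noteq> Lf" using graft_eq_Lf[of t l c] True Nd.prems by auto
    have lne: "l \<noteq> Lf" using True Nd.prems by auto
    have le1: "u + leaves c - 1 \<le> leaves (graft l t c)" using leaves_graft[of t l c] True Nd.prems by simp
    have le2: "t \<le> leaves (erase l u)" using leaves_erase[of l u] lne True Nd.prems by simp
    have "erase (graft (Nd l r) t c) (u + leaves c - 1) = Nd (erase (graft l t c) (u + leaves c - 1)) r"
      using graft_L[OF tl] erase_L[OF le1 ne] by simp
    also have "\<dots> = Nd (graft (erase l u) t c) r" using Nd.IH(1)[of t u] True Nd.prems by simp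
    also have "\<dots> = graft (erase (Nd l r) u) t c" using erase_L[OF True lne] graft_L[OF le2] by simp
    finally show ?thesis .
  next
    case False
    show ?thesis
    proof (cases "t \<le> leaves l")
      case True
      have A: "\<not> u + leaves c - 1 \<le> leaves (graft l t c)" using leaves_graft[of t l c] True Nd.prems False by simp
      have B: "u + leaves c - 1 - leaves (graft l t c) = u - leaves l" using leaves_graft[of t l c] True Nd.prems False by simp
      have lg: "leaves (graft (Nd l r) t c) = leaves l + leaves c - 1 + leaves r"
        using graft_L[OF True] leaves_graft[of t l c] True Nd.prems by simp
      show ?thesis
      proof (cases "r = Lf")
        case rf: True
        have "erase (graft (Nd l r) t c) (u + leaves c - 1) = graft l t c"
          using graft_L[OF True] erase_R1[OF A rf] by simp
        also have "\<dots> = graft (erase (Nd l r) u) t c" using erase_R1[OF False rf] by simp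
        finally show ?thesis .
      next
        case rne: False
        have "erase (graft (Nd l r) t c) (u + leaves c - 1) = Nd (graft l t c) (erase r (u - leaves l))"
          using graft_L[OF True] erase_R[OF A rne] B by simp
        also have "\<dots> = graft (erase (Nd l r) u) t c" using erase_R[OF False rne] graft_L[OF True] by simp
        finally show ?thesis .
      qed
    next
      case tf: False
      have ne: "graft r (t - leaves l) c \<noteq> Lf"
        using graft_eq_Lf[of "t - leaves l" r c] False tf Nd.prems by auto
      have rne: "r \<noteq> Lf" using False tf Nd.prems by auto
      have nle: "\<not> u + leaves c - 1 \<le> leaves l" using False leaves_pos[of c] by simp
      have e: "u + leaves c - 1 - leaves l = u - leaves l + leaves c - 1" using False by simp
      have "erase (graft (Nd l r) t c) (u + leaves c - 1) = Nd l (erase (graft r (t - leaves l) c) (u - leaves l + leaves c - 1))"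
        using graft_R[OF tf] erase_R[OF nle ne] e by simp
      also have "\<dots> = Nd l (graft (erase r (u - leaves l)) (t - leaves l) c)"
        using Nd.IH(2)[of "t - leaves l" "u - leaves l"] False tf Nd.prems by simp
      also have "\<dots> = graft (erase (Nd l r) u) t c"
        using erase_R[OF False rne] graft_R[OF tf] by simp
      finally show ?thesis .
    qed
  qed
qed




abbreviation FS :: "vec \<Rightarrow> bool" where "FS v \<equiv> finite (supp v)"

lemma sum_apply: "(\<Sum>i\<in>I. f i) x = (\<Sum>i\<in>I. f i x)"
  by (induction I rule: infinite_finite_induct) auto

lemma scal_apply[simp]: "scal a v x = a * v x" by (simp add: scal_def)
lemma basis_apply: "basis c x = (if x = c then 1 else 0)" by (simp add: basis_def)
lemma supp_iff: "x \<in> supp v \<longleftrightarrow> v x \<noteq> 0" by (simp add: supp_def)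

lemma supp_basis[simp]: "supp (basis c) = {c}" by (auto simp: supp_def basis_def)
lemma supp_zero[simp]: "supp 0 = {}" by (auto simp: supp_def)
lemma supp_add: "supp (v + w) \<subseteq> supp v \<union> supp w" by (auto simp: supp_def)
lemma supp_diff: "supp (v - w) \<subseteq> supp v \<union> supp w" by (auto simp: supp_def)
lemma supp_scal: "supp (scal a v) \<subseteq> supp v" by (auto simp: supp_def)
lemma supp_sum: "supp (\<Sum>i\<in>I. f i) \<subseteq> (\<Union>i\<in>I. supp (f i))"
proof (induction I rule: infinite_finite_induct)
  case (insert i F)
  have "supp (sum f (insert i F)) = supp (f i + sum f F)" using insert(1,2) by simp
  then show ?case using supp_add[of "f i" "sum f F"] insert.IH by blast
qed (auto simp: supp_def)

lemma FS_add: "FS v \<Longrightarrow> FS w \<Longrightarrow> FS (v + w)" by (rule finite_subset[OF supp_add]) simp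
lemma FS_diff: "FS v \<Longrightarrow> FS w \<Longrightarrow> FS (v - w)" by (rule finite_subset[OF supp_diff]) simp
lemma FS_scal: "FS v \<Longrightarrow> FS (scal a v)" by (rule finite_subset[OF supp_scal])
lemma FS_sum: "(\<And>i. i \<in> I \<Longrightarrow> FS (f i)) \<Longrightarrow> FS (\<Sum>i\<in>I. f i)"
proof (cases "finite I")
  case True
  assume "\<And>i. i \<in> I \<Longrightarrow> FS (f i)"
  then show ?thesis using True by (intro finite_subset[OF supp_sum]) auto
qed simp

lemma FS_bb: "FS (basic_br c d)"
  unfolding basic_br_def by (intro FS_diff FS_sum) auto

lemma br_apply:
  assumes "finite A" "finite B" "supp v \<subseteq> A" "supp w \<subseteq> B"
  shows "br v w x = (\<Sum>c\<in>A. \<Sum>d\<in>B. v c * w d * basic_br c d x)"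
proof -
  have fv: "finite (supp v)" "finite (supp w)" using assms finite_subset by auto
  have "br v w x = (\<Sum>c\<in>supp v. \<Sum>d\<in>supp w. v c * w d * basic_br c d x)"
    by (simp add: br_def sum_apply)
  also have "\<dots> = (\<Sum>c\<in>supp v. \<Sum>d\<in>B. v c * w d * basic_br c d x)"
    by (intro sum.cong refl sum.mono_neutral_left) (use assms in \<open>auto simp: supp_def\<close>)
  also have "\<dots> = (\<Sum>c\<in>A. \<Sum>d\<in>B. v c * w d * basic_br c d x)"
    by (intro sum.mono_neutral_left) (use assms in \<open>auto simp: supp_def\<close>)
  finally show ?thesis .
qed

lemma FS_br: "FS (br v w)"
  unfolding br_def by (intro FS_sum FS_scal FS_bb)

lemma br_add_left: assumes "FS v" "FS v'" "FS w" shows "br (v + v') w = br v w + br v' w"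
proof
  fix x
  let ?A = "supp v \<union> supp v'"
  have s: "supp (v + v') \<subseteq> ?A" by (rule supp_add)
  have b0: "br v w x = (\<Sum>c\<in>?A. \<Sum>d\<in>supp w. v c * w d * basic_br c d x)"
    using assms by (intro br_apply) auto
  have b1: "br v' w x = (\<Sum>c\<in>?A. \<Sum>d\<in>supp w. v' c * w d * basic_br c d x)"
    using assms by (intro br_apply) auto
  have "br (v + v') w x = (\<Sum>c\<in>?A. \<Sum>d\<in>supp w. (v + v') c * w d * basic_br c d x)"
    using assms s by (intro br_apply) auto
  also have "\<dots> = (\<Sum>c\<in>?A. \<Sum>d\<in>supp w. v c * w d * basic_br c d x) + (\<Sum>c\<in>?A. \<Sum>d\<in>supp w. v' c * w d * basic_br c d x)"
    by (simp only: plus_fun_apply distrib_right sum.distrib)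
  also have "\<dots> = br v w x + br v' w x"
    by (simp only: b0 b1)
  finally show "br (v + v') w x = (br v w + br v' w) x" by simp
qed

lemma br_add_right: assumes "FS v" "FS w" "FS w'" shows "br v (w + w') = br v w + br v w'"
proof
  fix x
  let ?B = "supp w \<union> supp w'"
  have s: "supp (w + w') \<subseteq> ?B" by (rule supp_add)
  have b0: "br v w x = (\<Sum>c\<in>supp v. \<Sum>d\<in>?B. v c * w d * basic_br c d x)"
    using assms by (intro br_apply) auto
  have b1: "br v w' x = (\<Sum>c\<in>supp v. \<Sum>d\<in>?B. v c * w' d * basic_br c d x)"
    using assms by (intro br_apply) auto
  have "br v (w + w') x = (\<Sum>c\<in>supp v. \<Sum>d\<in>?B. v c * (w + w') d * basic_br c d x)"
    using assms s by (intro br_apply) auto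
  also have "\<dots> = (\<Sum>c\<in>supp v. \<Sum>d\<in>?B. v c * w d * basic_br c d x) + (\<Sum>c\<in>supp v. \<Sum>d\<in>?B. v c * w' d * basic_br c d x)"
    by (simp only: plus_fun_apply distrib_right distrib_left sum.distrib)
  also have "\<dots> = br v w x + br v w' x"
    by (simp only: b0 b1)
  finally show "br v (w + w') x = (br v w + br v w') x" by simp
qed

lemma br_diff_right: assumes "FS v" "FS w" "FS w'" shows "br v (w - w') = br v w - br v w'"
proof
  fix x
  let ?B = "supp w \<union> supp w'"
  have s: "supp (w - w') \<subseteq> ?B" by (rule supp_diff)
  have b0: "br v w x = (\<Sum>c\<in>supp v. \<Sum>d\<in>?B. v c * w d * basic_br c d x)"
    using assms by (intro br_apply) auto
  have b1: "br v w' x = (\<Sum>c\<in>supp v. \<Sum>d\<in>?B. v c * w' d * basic_br c d x)"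
    using assms by (intro br_apply) auto
  have "br v (w - w') x = (\<Sum>c\<in>supp v. \<Sum>d\<in>?B. v c * (w - w') d * basic_br c d x)"
    using assms s by (intro br_apply) auto
  also have "\<dots> = (\<Sum>c\<in>supp v. \<Sum>d\<in>?B. v c * w d * basic_br c d x) - (\<Sum>c\<in>supp v. \<Sum>d\<in>?B. v c * w' d * basic_br c d x)"
    by (simp only: minus_apply left_diff_distrib right_diff_distrib sum_subtractf)
  also have "\<dots> = br v w x - br v w' x"
    by (simp only: b0 b1)
  finally show "br v (w - w') x = (br v w - br v w') x" by simp
qed

lemma br_scal_left: assumes "FS v" "FS w" shows "br (scal a v) w = scal a (br v w)"
proof
  fix x
  have b0: "br v w x = (\<Sum>c\<in>supp v. \<Sum>d\<in>supp w. v c * w d * basic_br c d x)"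
    using assms by (intro br_apply) auto
  have "br (scal a v) w x = (\<Sum>c\<in>supp v. \<Sum>d\<in>supp w. scal a v c * w d * basic_br c d x)"
    using assms supp_scal[of a v] by (intro br_apply) auto
  also have "\<dots> = a * (\<Sum>c\<in>supp v. \<Sum>d\<in>supp w. v c * w d * basic_br c d x)"
    by (simp only: scal_apply sum_distrib_left mult.assoc)
  also have "\<dots> = a * br v w x"
    by (simp only: b0)
  finally show "br (scal a v) w x = scal a (br v w) x" by simp
qed

lemma br_scal_right: assumes "FS v" "FS w" shows "br v (scal a w) = scal a (br v w)"
proof
  fix x
  have b0: "br v w x = (\<Sum>c\<in>supp v. \<Sum>d\<in>supp w. v c * w d * basic_br c d x)"
    using assms by (intro br_apply) auto
  have "br v (scal a w) x = (\<Sum>c\<in>supp v. \<Sum>d\<in>supp w. v c * scal a w d * basic_br c d x)"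
    using assms supp_scal[of a w] by (intro br_apply) auto
  also have "\<dots> = (\<Sum>c\<in>supp v. \<Sum>d\<in>supp w. a * (v c * w d * basic_br c d x))"
    by (simp only: scal_apply mult.assoc mult.left_commute)
  also have "\<dots> = a * (\<Sum>c\<in>supp v. \<Sum>d\<in>supp w. v c * w d * basic_br c d x)"
    by (simp only: sum_distrib_left)
  also have "\<dots> = a * br v w x"
    by (simp only: b0)
  finally show "br v (scal a w) x = scal a (br v w) x" by simp
qed

lemma bb_antisym: "basic_br c d x = - basic_br d c x"
  by (simp add: basic_br_def)

lemma br_antisym: assumes "FS v" "FS w" shows "br v w = scal (-1) (br w v)"
proof
  fix x
  have b0: "br w v x = (\<Sum>c\<in>supp w. \<Sum>d\<in>supp v. w c * v d * basic_br c d x)"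
    using assms by (intro br_apply) auto
  have "br v w x = (\<Sum>c\<in>supp v. \<Sum>d\<in>supp w. v c * w d * basic_br c d x)"
    using assms by (intro br_apply) auto
  also have "\<dots> = (\<Sum>d\<in>supp w. \<Sum>c\<in>supp v. - (w d * v c * basic_br d c x))"
    by (subst sum.swap) (intro sum.cong refl, simp add: basic_br_def algebra_simps)
  also have "\<dots> = - (\<Sum>d\<in>supp w. \<Sum>c\<in>supp v. w d * v c * basic_br d c x)"
    by (simp only: sum_negf)
  also have "\<dots> = - br w v x"
    by (simp only: b0)
  finally show "br v w x = scal (-1) (br w v) x" by simp
qed

lemma scal_one[simp]: "scal 1 v = v" by (simp add: scal_def)

lemma br_zero_left[simp]: "br 0 w = 0" by (simp add: br_def)
lemma br_zero_right[simp]: "br v 0 = 0" by (simp add: br_def)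

lemma br_basis: "br (basis c) (basis d) = basic_br c d"
  by (simp add: br_def basis_apply)

lemma br_sum_right: assumes "FS v" "\<And>i. i \<in> I \<Longrightarrow> FS (f i)"
  shows "br v (\<Sum>i\<in>I. f i) = (\<Sum>i\<in>I. br v (f i))"
  using assms(2)
proof (induction I rule: infinite_finite_induct)
  case (insert i F)
  have fi: "FS (f i)" using insert.prems by auto
  have fF: "FS (sum f F)" using insert.prems by (intro FS_sum) auto
  have ih: "br v (sum f F) = (\<Sum>i\<in>F. br v (f i))" by (rule insert.IH) (use insert.prems in auto)
  have "br v (sum f (insert i F)) = br v (f i + sum f F)" by (simp only: sum.insert[OF insert(1,2)])
  also have "\<dots> = br v (f i) + br v (sum f F)" by (rule br_add_right[OF assms(1) fi fF])
  also have "\<dots> = br v (f i) + (\<Sum>i\<in>F. br v (f i))" by (simp only: ih)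
  finally show ?case by (simp only: sum.insert[OF insert(1,2)])
qed auto

lemma br_sum_left: assumes "FS w" "\<And>i. i \<in> I \<Longrightarrow> FS (f i)"
  shows "br (\<Sum>i\<in>I. f i) w = (\<Sum>i\<in>I. br (f i) w)"
  using assms(2)
proof (induction I rule: infinite_finite_induct)
  case (insert i F)
  have fi: "FS (f i)" using insert.prems by auto
  have fF: "FS (sum f F)" using insert.prems by (intro FS_sum) auto
  have ih: "br (sum f F) w = (\<Sum>i\<in>F. br (f i) w)" by (rule insert.IH) (use insert.prems in auto)
  have "br (sum f (insert i F)) w = br (f i + sum f F) w" by (simp only: sum.insert[OF insert(1,2)])
  also have "\<dots> = br (f i) w + br (sum f F) w" by (rule br_add_left[OF fi fF assms(1)])
  also have "\<dots> = br (f i) w + (\<Sum>i\<in>F. br (f i) w)" by (simp only: ih)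
  finally show ?case by (simp only: sum.insert[OF insert(1,2)])
qed auto

lemma vec_decomp: assumes "FS v" shows "v = (\<Sum>c\<in>supp v. scal (v c) (basis c))"
proof
  fix x
  have "(\<Sum>c\<in>supp v. v c * basis c x) = (if x \<in> supp v then v x else 0)"
    using assms by (simp add: basis_apply if_distrib sum.delta cong: if_cong)
  then show "v x = (\<Sum>c\<in>supp v. scal (v c) (basis c)) x"
    by (simp add: sum_apply supp_def)
qed




definition deg :: "elem \<Rightarrow> rat" where "deg x = of_nat (arity x) - 1"
definition degv :: "vec \<Rightarrow> vec" where "degv v = (\<lambda>x. deg x * v x)"

lemma degv_apply: "degv v x = deg x * v x" by (simp add: degv_def)

lemma deg_comp: assumes "1 \<le> t" "t \<le> arity d" shows "deg (comp d t c) = deg d + deg c"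
proof (cases d)
  case Circ then show ?thesis using assms by simp
next
  case (Tr S)
  show ?thesis
  proof (cases c)
    case Circ
    show ?thesis
    proof (cases "S = Lf")
      case True then show ?thesis using Tr Circ by (simp add: deg_def)
    next
      case False
      have "leaves (erase S t) = leaves S - 1" using leaves_erase[OF False] assms Tr by simp
      moreover have "leaves S \<ge> 1" by (rule leaves_pos)
      ultimately show ?thesis using Tr Circ False by (simp add: deg_def of_nat_diff)
    qed
  next
    case (Tr T)
    have "leaves (graft S t T) = leaves S + leaves T - 1" using leaves_graft assms \<open>d = Tr S\<close> by simp
    moreover have "leaves T \<ge> 1" by (rule leaves_pos)
    ultimately show ?thesis using Tr \<open>d = Tr S\<close> by (simp add: deg_def of_nat_diff)
  qed
qed

lemma deg_basis_term: "deg x * basis y x = deg y * basis y x"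
  by (simp add: basis_apply)

lemma degv_bb_apply: "deg x * basic_br c d x = (deg c + deg d) * basic_br c d x"
proof -
  have "deg x * basic_br c d x =
     (\<Sum>t\<in>{1..arity d}. deg x * basis (comp d t c) x) - (\<Sum>s\<in>{1..arity c}. deg x * basis (comp c s d) x)"
    by (simp add: basic_br_def sum_apply sum_distrib_left right_diff_distrib)
  also have "\<dots> = (\<Sum>t\<in>{1..arity d}. (deg c + deg d) * basis (comp d t c) x) - (\<Sum>s\<in>{1..arity c}. (deg c + deg d) * basis (comp c s d) x)"
    by (intro arg_cong2[where f = "(-)"] sum.cong refl)
       (simp_all only: deg_basis_term[of x] deg_comp atLeastAtMost_iff add.commute)
  also have "\<dots> = (deg c + deg d) * basic_br c d x"
    by (simp add: basic_br_def sum_apply sum_distrib_left right_diff_distrib)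
  finally show ?thesis .
qed

lemma supp_degv: "supp (degv v) \<subseteq> supp v" by (auto simp: supp_def degv_def)
lemma FS_degv: "FS v \<Longrightarrow> FS (degv v)" by (rule finite_subset[OF supp_degv])

lemma degv_zero[simp]: "degv 0 = 0" by (simp add: degv_def fun_eq_iff)
lemma degv_add: "degv (v + w) = degv v + degv w" by (simp add: degv_def fun_eq_iff algebra_simps)
lemma degv_scal: "degv (scal a v) = scal a (degv v)" by (simp add: degv_def fun_eq_iff algebra_simps)

lemma degv_br: assumes "FS v" "FS w" shows "degv (br v w) = br (degv v) w + br v (degv w)"
proof
  fix x
  have b0: "br v w x = (\<Sum>c\<in>supp v. \<Sum>d\<in>supp w. v c * w d * basic_br c d x)"
    using assms by (intro br_apply) auto
  have b1: "br (degv v) w x = (\<Sum>c\<in>supp v. \<Sum>d\<in>supp w. degv v c * w d * basic_br c d x)"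
    using assms supp_degv by (intro br_apply) auto
  have b2: "br v (degv w) x = (\<Sum>c\<in>supp v. \<Sum>d\<in>supp w. v c * degv w d * basic_br c d x)"
    using assms supp_degv by (intro br_apply) auto
  have "degv (br v w) x = (\<Sum>c\<in>supp v. \<Sum>d\<in>supp w. v c * w d * (deg x * basic_br c d x))"
    by (simp add: degv_apply b0 sum_distrib_left algebra_simps)
  also have "\<dots> = (\<Sum>c\<in>supp v. \<Sum>d\<in>supp w. v c * w d * ((deg c + deg d) * basic_br c d x))"
    by (simp only: degv_bb_apply)
  also have "\<dots> = br (degv v) w x + br v (degv w) x"
    by (simp add: b1 b2 degv_apply sum.distrib[symmetric] algebra_simps)
  finally show "degv (br v w) x = (br (degv v) w + br v (degv w)) x" by simp
qed

lemma bb_L: "basic_br (Tr Lf) d = scal (deg d) (basis d)"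
proof (cases d)
  case Circ then show ?thesis by (simp add: basic_br_def deg_def fun_eq_iff)
next
  case (Tr S)
  have "basic_br (Tr Lf) d = (\<Sum>t\<in>{1..leaves S}. basis d) - basis d"
    using Tr by (simp add: basic_br_def graft_Lf)
  also have "\<dots> = scal (deg d) (basis d)"
    using Tr by (simp add: deg_def fun_eq_iff sum_apply algebra_simps)
  finally show ?thesis .
qed

lemma br_L: assumes "FS v" shows "br (basis (Tr Lf)) v = degv v"
proof
  fix x
  have "br (basis (Tr Lf)) v x = (\<Sum>c\<in>{Tr Lf}. \<Sum>d\<in>supp v. basis (Tr Lf) c * v d * basic_br c d x)"
    using assms by (intro br_apply) auto
  also have "\<dots> = (\<Sum>d\<in>supp v. v d * (deg d * basis d x))"
    by (simp add: bb_L basis_apply)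
  also have "\<dots> = (\<Sum>d\<in>supp v. if d = x then v x * deg x else 0)"
    by (intro sum.cong refl) (simp add: basis_apply)
  also have "\<dots> = degv v x"
    using assms by (simp add: sum.delta' degv_apply supp_def)
  finally show "br (basis (Tr Lf)) v x = degv v x" .
qed




lemma tri: "(\<Sum>a\<in>{1..n}. \<Sum>b\<in>{1..<a}. f a b) = (\<Sum>b\<in>{1..n}. \<Sum>a\<in>{Suc b..<Suc n}. (f a b :: 'a::comm_monoid_add))"
proof (induction n)
  case 0 then show ?case by simp
next
  case (Suc n)
  have "(\<Sum>a\<in>{1..Suc n}. \<Sum>b\<in>{1..<a}. f a b) = (\<Sum>a\<in>{1..n}. \<Sum>b\<in>{1..<a}. f a b) + (\<Sum>b\<in>{1..<Suc n}. f (Suc n) b)"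
    by (simp add: atLeastAtMostSuc_conv ac_simps)
  also have "\<dots> = (\<Sum>b\<in>{1..n}. \<Sum>a\<in>{Suc b..<Suc n}. f a b) + (\<Sum>b\<in>{1..n}. f (Suc n) b)"
    by (subst Suc.IH) (simp add: atLeastLessThanSuc_atLeastAtMost)
  also have "\<dots> = (\<Sum>b\<in>{1..n}. \<Sum>a\<in>{Suc b..<Suc (Suc n)}. f a b)"
    by (simp add: sum.distrib[symmetric] sum.atLeastLessThan_Suc)
  also have "\<dots> = (\<Sum>b\<in>{1..Suc n}. \<Sum>a\<in>{Suc b..<Suc (Suc n)}. f a b)"
    by (simp add: atLeastAtMostSuc_conv)
  finally show ?case .
qed

lemma FAB:
  fixes g :: "tree \<Rightarrow> 'a::comm_monoid_add"
  assumes "c \<noteq> Lf"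
  shows "(\<Sum>t\<in>{1..leaves d}. \<Sum>u\<in>{1..leaves d + leaves c - 1}. g (erase (graft d t c) u))
       = (\<Sum>u\<in>{1..leaves c}. \<Sum>t\<in>{1..leaves d}. g (graft d t (erase c u)))
       + (\<Sum>u\<in>{1..leaves d}. \<Sum>t\<in>{1..leaves d - 1}. g (graft (erase d u) t c))"
proof -
  define j where "j = leaves d"
  define k where "k = leaves c"
  have j1: "j \<ge> 1" and k1: "k \<ge> 1" unfolding j_def k_def by (rule leaves_pos)+
  define h where "h u t = g (graft (erase d u) t c)" for u t
  define T1 where "T1 = (\<Sum>t\<in>{1..j}. \<Sum>u\<in>{1..<t}. h u (t - 1))"
  define T3 where "T3 = (\<Sum>t\<in>{1..j}. \<Sum>u\<in>{Suc t..<Suc j}. h u t)"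
  define A where "A = (\<Sum>t\<in>{1..j}. \<Sum>u\<in>{1..k}. g (graft d t (erase c u)))"
  have inner: "(\<Sum>u\<in>{1..j + k - 1}. g (erase (graft d t c) u)) =
     (\<Sum>u\<in>{1..<t}. h u (t - 1)) + (\<Sum>u\<in>{1..k}. g (graft d t (erase c u))) + (\<Sum>u\<in>{Suc t..<Suc j}. h u t)"
    if t: "t \<in> {1..j}" for t
  proof -
    let ?G = "\<lambda>u. g (erase (graft d t c) u)"
    have e: "{1..j + k - 1} = {1..<j + k}" using j1 k1 by auto
    have "sum ?G {1..<j + k} = sum ?G {1..<t} + sum ?G {t..<t + k} + sum ?G {t + k..<j + k}"
      using t k1 by (simp add: sum.atLeastLessThan_concat)
    moreover have "sum ?G {1..<t} = (\<Sum>u\<in>{1..<t}. h u (t - 1))"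
      using t by (intro sum.cong refl) (simp add: h_def E2 j_def)
    moreover have "sum ?G {t..<t + k} = (\<Sum>u\<in>{1..k}. g (graft d t (erase c u)))"
    proof (rule sum.reindex_bij_witness[where i = "\<lambda>u. t - 1 + u" and j = "\<lambda>u. u - (t - 1)"])
      fix a assume a: "a \<in> {t..<t + k}"
      have "erase (graft d t c) (t - 1 + (a - (t - 1))) = graft d t (erase c (a - (t - 1)))"
        using a t assms by (intro E1) (auto simp: j_def k_def)
      moreover have "t - 1 + (a - (t - 1)) = a" using a t by auto
      ultimately show "g (graft d t (erase c (a - (t - 1)))) = ?G a" by simp
    qed (use t in auto)
    moreover have "sum ?G {t + k..<j + k} = (\<Sum>u\<in>{Suc t..<Suc j}. h u t)"
    proof (rule sum.reindex_bij_witness[where i = "\<lambda>u. u + k - 1" and j = "\<lambda>u. u + 1 - k"])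
      fix a assume a: "a \<in> {t + k..<j + k}"
      have "erase (graft d t c) ((a + 1 - k) + leaves c - 1) = graft (erase d (a + 1 - k)) t c"
        using a t k1 by (intro E3) (auto simp: j_def k_def)
      moreover have "(a + 1 - k) + leaves c - 1 = a" using a k1 by (auto simp: k_def)
      ultimately show "h (a + 1 - k) t = ?G a" by (simp add: h_def)
    qed (use t k1 in auto)
    ultimately show ?thesis using e by simp
  qed
  have "(\<Sum>t\<in>{1..j}. \<Sum>u\<in>{1..j + k - 1}. g (erase (graft d t c) u)) = T1 + A + T3"
    unfolding T1_def T3_def A_def
    by (subst sum.cong[OF refl inner], assumption) (simp only: sum.distrib)
  moreover have "A = (\<Sum>u\<in>{1..k}. \<Sum>t\<in>{1..j}. g (graft d t (erase c u)))"
    unfolding A_def by (rule sum.swap)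
  moreover have "(\<Sum>u\<in>{1..j}. \<Sum>t\<in>{1..j - 1}. h u t) = T3 + T1"
  proof -
    have "(\<Sum>u\<in>{1..j}. \<Sum>t\<in>{1..j - 1}. h u t) = (\<Sum>u\<in>{1..j}. (\<Sum>t\<in>{1..<u}. h u t) + (\<Sum>t\<in>{u..<j}. h u t))"
    proof (intro sum.cong refl)
      fix u assume u: "u \<in> {1..j}"
      have "{1..j - 1} = {1..<j}" using j1 by auto
      then show "(\<Sum>t\<in>{1..j - 1}. h u t) = (\<Sum>t\<in>{1..<u}. h u t) + (\<Sum>t\<in>{u..<j}. h u t)"
        using u by (simp add: sum.atLeastLessThan_concat)
    qed
    also have "\<dots> = (\<Sum>u\<in>{1..j}. \<Sum>t\<in>{1..<u}. h u t) + (\<Sum>u\<in>{1..j}. \<Sum>t\<in>{u..<j}. h u t)"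
      by (rule sum.distrib)
    also have "(\<Sum>u\<in>{1..j}. \<Sum>t\<in>{1..<u}. h u t) = T3"
      unfolding T3_def by (rule tri)
    also have "(\<Sum>u\<in>{1..j}. \<Sum>t\<in>{u..<j}. h u t) = T1"
    proof -
      have "T1 = (\<Sum>u\<in>{1..j}. \<Sum>t\<in>{Suc u..<Suc j}. h u (t - 1))"
        unfolding T1_def by (rule tri)
      also have "\<dots> = (\<Sum>u\<in>{1..j}. \<Sum>t\<in>{u..<j}. h u t)"
      proof (rule sum.cong[OF refl])
        fix u
        show "(\<Sum>t\<in>{Suc u..<Suc j}. h u (t - 1)) = (\<Sum>t\<in>{u..<j}. h u t)"
          by (rule sum.reindex_bij_witness[where i = "\<lambda>t. t + 1" and j = "\<lambda>t. t - 1"]) auto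
      qed
      finally show ?thesis by simp
    qed
    finally show ?thesis .
  qed
  ultimately show ?thesis unfolding j_def[symmetric] k_def[symmetric] h_def
    by (simp add: ac_simps)
qed




lemma bb_C: "T \<noteq> Lf \<Longrightarrow> basic_br Circ (Tr T) = (\<Sum>u\<in>{1..leaves T}. basis (Tr (erase T u)))"
  by (simp add: basic_br_def)

lemma bb_TT: "basic_br (Tr c) (Tr d) = (\<Sum>t\<in>{1..leaves d}. basis (Tr (graft d t c))) - (\<Sum>s\<in>{1..leaves c}. basis (Tr (graft c s d)))"
  by (simp add: basic_br_def)

lemma brC_sum_graft:
  assumes "c \<noteq> Lf"
  shows "br (basis Circ) (\<Sum>t\<in>{1..leaves d}. basis (Tr (graft d t c))) =
    (\<Sum>t\<in>{1..leaves d}. \<Sum>u\<in>{1..leaves d + leaves c - 1}. basis (Tr (erase (graft d t c) u)))"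
proof -
  have "br (basis Circ) (\<Sum>t\<in>{1..leaves d}. basis (Tr (graft d t c))) = (\<Sum>t\<in>{1..leaves d}. br (basis Circ) (basis (Tr (graft d t c))))"
    by (rule br_sum_right) auto
  also have "\<dots> = (\<Sum>t\<in>{1..leaves d}. \<Sum>u\<in>{1..leaves d + leaves c - 1}. basis (Tr (erase (graft d t c) u)))"
  proof (rule sum.cong[OF refl])
    fix t assume t: "t \<in> {1..leaves d}"
    have ne: "graft d t c \<noteq> Lf" using graft_eq_Lf[of t d c] t assms by auto
    have l: "leaves (graft d t c) = leaves d + leaves c - 1" using leaves_graft[of t d c] t by auto
    show "br (basis Circ) (basis (Tr (graft d t c))) = (\<Sum>u\<in>{1..leaves d + leaves c - 1}. basis (Tr (erase (graft d t c) u)))"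
      by (simp only: br_basis bb_C[OF ne] l)
  qed
  finally show ?thesis .
qed

lemma circ_identity:
  assumes c: "c \<noteq> Lf" and d: "d \<noteq> Lf"
  shows "br (basis Circ) (basic_br (Tr c) (Tr d)) =
     br (basic_br Circ (Tr c)) (basis (Tr d)) + br (basis (Tr c)) (basic_br Circ (Tr d))"
proof -
  define g where "g T = basis (Tr T)" for T
  define A where "A c d = (\<Sum>u\<in>{1..leaves c}. \<Sum>t\<in>{1..leaves d}. g (graft d t (erase c u)))" for c d
  define B where "B c d = (\<Sum>u\<in>{1..leaves d}. \<Sum>t\<in>{1..leaves d - 1}. g (graft (erase d u) t c))" for c d
  have F1: "(\<Sum>t\<in>{1..leaves d}. \<Sum>u\<in>{1..leaves d + leaves c - 1}. g (erase (graft d t c) u)) = A c d + B c d"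
    unfolding A_def B_def by (rule FAB[OF c])
  have F2: "(\<Sum>t\<in>{1..leaves c}. \<Sum>u\<in>{1..leaves c + leaves d - 1}. g (erase (graft c t d) u)) = A d c + B d c"
    unfolding A_def B_def by (rule FAB[OF d])
  have L: "br (basis Circ) (basic_br (Tr c) (Tr d)) = (A c d + B c d) - (A d c + B d c)"
  proof -
    have "br (basis Circ) (basic_br (Tr c) (Tr d)) = br (basis Circ) (\<Sum>t\<in>{1..leaves d}. basis (Tr (graft d t c))) - br (basis Circ) (\<Sum>s\<in>{1..leaves c}. basis (Tr (graft c s d)))"
      unfolding bb_TT by (rule br_diff_right) (auto intro: FS_sum)
    then show ?thesis by (simp only: brC_sum_graft[OF c] brC_sum_graft[OF d] F1[unfolded g_def] F2[unfolded g_def])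
  qed
  have R1: "br (basic_br Circ (Tr c)) (basis (Tr d)) = A c d - B d c"
  proof -
    have "br (basic_br Circ (Tr c)) (basis (Tr d)) = (\<Sum>u\<in>{1..leaves c}. br (basis (Tr (erase c u))) (basis (Tr d)))"
      unfolding bb_C[OF c] by (rule br_sum_left) auto
    also have "\<dots> = (\<Sum>u\<in>{1..leaves c}. (\<Sum>t\<in>{1..leaves d}. g (graft d t (erase c u))) - (\<Sum>s\<in>{1..leaves c - 1}. g (graft (erase c u) s d)))"
    proof (rule sum.cong[OF refl])
      fix u assume u: "u \<in> {1..leaves c}"
      have l: "leaves (erase c u) = leaves c - 1" using leaves_erase[OF c, of u] u by auto
      show "br (basis (Tr (erase c u))) (basis (Tr d)) = (\<Sum>t\<in>{1..leaves d}. g (graft d t (erase c u))) - (\<Sum>s\<in>{1..leaves c - 1}. g (graft (erase c u) s d))"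
        by (simp only: br_basis bb_TT l g_def)
    qed
    also have "\<dots> = A c d - B d c" unfolding A_def B_def by (rule sum_subtractf)
    finally show ?thesis .
  qed
  have R2: "br (basis (Tr c)) (basic_br Circ (Tr d)) = B c d - A d c"
  proof -
    have "br (basis (Tr c)) (basic_br Circ (Tr d)) = (\<Sum>u\<in>{1..leaves d}. br (basis (Tr c)) (basis (Tr (erase d u))))"
      unfolding bb_C[OF d] by (rule br_sum_right) auto
    also have "\<dots> = (\<Sum>u\<in>{1..leaves d}. (\<Sum>t\<in>{1..leaves d - 1}. g (graft (erase d u) t c)) - (\<Sum>s\<in>{1..leaves c}. g (graft c s (erase d u))))"
    proof (rule sum.cong[OF refl])
      fix u assume u: "u \<in> {1..leaves d}"
      have l: "leaves (erase d u) = leaves d - 1" using leaves_erase[OF d, of u] u by auto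
      show "br (basis (Tr c)) (basis (Tr (erase d u))) = (\<Sum>t\<in>{1..leaves d - 1}. g (graft (erase d u) t c)) - (\<Sum>s\<in>{1..leaves c}. g (graft c s (erase d u)))"
        by (simp only: br_basis bb_TT l g_def)
    qed
    also have "\<dots> = B c d - A d c" unfolding A_def B_def by (rule sum_subtractf)
    finally show ?thesis .
  qed
  show ?thesis unfolding L R1 R2 by (simp add: algebra_simps)
qed




definition T2 :: "elem set" where "T2 = {x. \<exists>t. x = Tr t \<and> t \<noteq> Lf}"

lemma scal_sum: "scal a (\<Sum>i\<in>I. f i) = (\<Sum>i\<in>I. scal a (f i))"
  by (simp add: fun_eq_iff sum_apply sum_distrib_left)

lemma scal_mult: "scal (a * b) v = scal a (scal b v)"
  by (simp add: scal_def mult.assoc)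

lemma lin_right: assumes "FS v" "\<And>i. i \<in> I \<Longrightarrow> FS (X i)"
  shows "br v (\<Sum>i\<in>I. scal (a i) (X i)) = (\<Sum>i\<in>I. scal (a i) (br v (X i)))"
proof -
  have "br v (\<Sum>i\<in>I. scal (a i) (X i)) = (\<Sum>i\<in>I. br v (scal (a i) (X i)))"
    using assms by (intro br_sum_right FS_scal) auto
  also have "\<dots> = (\<Sum>i\<in>I. scal (a i) (br v (X i)))"
    using assms by (intro sum.cong refl br_scal_right) auto
  finally show ?thesis .
qed

lemma lin_left: assumes "FS w" "\<And>i. i \<in> I \<Longrightarrow> FS (X i)"
  shows "br (\<Sum>i\<in>I. scal (a i) (X i)) w = (\<Sum>i\<in>I. scal (a i) (br (X i) w))"
proof -
  have "br (\<Sum>i\<in>I. scal (a i) (X i)) w = (\<Sum>i\<in>I. br (scal (a i) (X i)) w)"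
    using assms by (intro br_sum_left FS_scal) auto
  also have "\<dots> = (\<Sum>i\<in>I. scal (a i) (br (X i) w))"
    using assms by (intro sum.cong refl br_scal_left) auto
  finally show ?thesis .
qed

lemma FS_basis: "FS (basis c)" by simp

lemma br_C_deriv:
  assumes fv: "FS v" and fw: "FS w" and sv: "supp v \<subseteq> T2" and sw: "supp w \<subseteq> T2"
  shows "br (basis Circ) (br v w) = br (br (basis Circ) v) w + br v (br (basis Circ) w)"
proof -
  let ?C = "basis Circ"
  have e: "br v w = (\<Sum>c\<in>supp v. scal (v c) (\<Sum>d\<in>supp w. scal (w d) (basic_br c d)))"
    unfolding br_def by (simp add: scal_sum scal_mult)
  have L: "br ?C (br v w) = (\<Sum>c\<in>supp v. scal (v c) (\<Sum>d\<in>supp w. scal (w d) (br ?C (basic_br c d))))"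
    unfolding e
    by (subst lin_right) (auto intro!: FS_sum FS_scal FS_bb sum.cong arg_cong[where f="scal _"] lin_right)
  have Cv: "br ?C v = (\<Sum>c\<in>supp v. scal (v c) (br ?C (basis c)))"
    by (subst vec_decomp[OF fv]) (rule lin_right, auto)
  have Cw: "br ?C w = (\<Sum>d\<in>supp w. scal (w d) (br ?C (basis d)))"
    by (subst vec_decomp[OF fw]) (rule lin_right, auto)
  have R1: "br (br ?C v) w = (\<Sum>c\<in>supp v. scal (v c) (\<Sum>d\<in>supp w. scal (w d) (br (br ?C (basis c)) (basis d))))"
  proof -
    have "br (br ?C v) w = (\<Sum>c\<in>supp v. scal (v c) (br (br ?C (basis c)) w))"
      unfolding Cv using fw by (rule lin_left) (rule FS_br)
    also have "\<dots> = (\<Sum>c\<in>supp v. scal (v c) (\<Sum>d\<in>supp w. scal (w d) (br (br ?C (basis c)) (basis d))))"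
    proof (rule sum.cong[OF refl])
      fix c
      show "scal (v c) (br (br ?C (basis c)) w) = scal (v c) (\<Sum>d\<in>supp w. scal (w d) (br (br ?C (basis c)) (basis d)))"
        by (subst vec_decomp[OF fw]) (subst lin_right, auto intro: FS_br)
    qed
    finally show ?thesis .
  qed
  have R2: "br v (br ?C w) = (\<Sum>d\<in>supp w. scal (w d) (\<Sum>c\<in>supp v. scal (v c) (br (basis c) (br ?C (basis d)))))"
  proof -
    have "br v (br ?C w) = (\<Sum>d\<in>supp w. scal (w d) (br v (br ?C (basis d))))"
      unfolding Cw using fv by (rule lin_right) (rule FS_br)
    also have "\<dots> = (\<Sum>d\<in>supp w. scal (w d) (\<Sum>c\<in>supp v. scal (v c) (br (basis c) (br ?C (basis d)))))"
    proof (rule sum.cong[OF refl])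
      fix d
      show "scal (w d) (br v (br ?C (basis d))) = scal (w d) (\<Sum>c\<in>supp v. scal (v c) (br (basis c) (br ?C (basis d))))"
        by (subst vec_decomp[OF fv]) (subst lin_left, auto intro: FS_br)
    qed
    finally show ?thesis .
  qed
  have key: "br ?C (basic_br c d) x = br (br ?C (basis c)) (basis d) x + br (basis c) (br ?C (basis d)) x"
    if cd: "c \<in> supp v" "d \<in> supp w" for c d x
  proof -
    obtain s t where "c = Tr s" "s \<noteq> Lf" "d = Tr t" "t \<noteq> Lf" using cd sv sw unfolding T2_def by blast
    then show ?thesis using circ_identity[of s t] by (simp add: br_basis)
  qed
  show ?thesis
  proof
    fix x
    have "br ?C (br v w) x = (\<Sum>c\<in>supp v. \<Sum>d\<in>supp w. v c * w d * br ?C (basic_br c d) x)"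
      unfolding L by (simp add: sum_apply sum_distrib_left mult.assoc)
    also have "\<dots> = (\<Sum>c\<in>supp v. \<Sum>d\<in>supp w. v c * w d * br (br ?C (basis c)) (basis d) x)
                  + (\<Sum>c\<in>supp v. \<Sum>d\<in>supp w. v c * w d * br (basis c) (br ?C (basis d)) x)"
      by (simp add: key distrib_left sum.distrib cong: sum.cong)
    also have "\<dots> = (br (br ?C v) w + br v (br ?C w)) x"
      unfolding R1 R2 by (simp add: sum_apply sum_distrib_left mult.assoc mult.left_commute sum.swap[of _ "supp w"])
    finally show "br ?C (br v w) x = (br (br ?C v) w + br v (br ?C w)) x" .
  qed
qed




lemma lie_gen_induct[consumes 1, case_names gen zero add smult bracket]:
  assumes "x \<in> lie_gen S"
    and "\<And>v. v \<in> S \<Longrightarrow> P v" and "P 0"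
    and "\<And>v w. v \<in> lie_gen S \<Longrightarrow> P v \<Longrightarrow> w \<in> lie_gen S \<Longrightarrow> P w \<Longrightarrow> P (v + w)"
    and "\<And>v a. v \<in> lie_gen S \<Longrightarrow> P v \<Longrightarrow> P (scal a v)"
    and "\<And>v w. v \<in> lie_gen S \<Longrightarrow> P v \<Longrightarrow> w \<in> lie_gen S \<Longrightarrow> P w \<Longrightarrow> P (br v w)"
  shows "P x"
  using assms(1)
proof (induction rule: lie_gen.induct)
  case (gen v) then show ?case by (rule assms(2))
next
  case zero then show ?case by (rule assms(3))
next
  case (add v w) then show ?case by (blast intro: assms(4))
next
  case (smult v a) then show ?case by (rule assms(5))
next
  case (bracket v w) then show ?case by (blast intro: assms(6))
qed
abbreviation SG :: "nat \<Rightarrow> vec set" where "SG m \<equiv> {basis (Tr t) | t. 2 \<le> leaves t \<and> leaves t \<le> m}"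

lemma graft_ne: "S \<noteq> Lf \<Longrightarrow> graft S i T \<noteq> Lf"
  by (cases S) auto

lemma supp_bb_T2: assumes "c \<in> T2" "d \<in> T2" shows "supp (basic_br c d) \<subseteq> T2"
proof -
  obtain s t where st: "c = Tr s" "s \<noteq> Lf" "d = Tr t" "t \<noteq> Lf" using assms unfolding T2_def by blast
  have "supp (basic_br c d) \<subseteq> supp (\<Sum>i\<in>{1..leaves t}. basis (Tr (graft t i s))) \<union> supp (\<Sum>i\<in>{1..leaves s}. basis (Tr (graft s i t)))"
    unfolding st bb_TT by (rule supp_diff)
  also have "\<dots> \<subseteq> T2"
    using supp_sum[of "\<lambda>i. basis (Tr (graft t i s))" "{1..leaves t}"] supp_sum[of "\<lambda>i. basis (Tr (graft s i t))" "{1..leaves s}"]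
      graft_ne st unfolding T2_def by fastforce
  finally show ?thesis .
qed

lemma supp_br_T2: assumes "supp v \<subseteq> T2" "supp w \<subseteq> T2" shows "supp (br v w) \<subseteq> T2"
proof -
  have "supp (br v w) \<subseteq> (\<Union>c\<in>supp v. supp (\<Sum>d\<in>supp w. scal (v c * w d) (basic_br c d)))"
    unfolding br_def by (rule supp_sum)
  also have "\<dots> \<subseteq> (\<Union>c\<in>supp v. \<Union>d\<in>supp w. supp (scal (v c * w d) (basic_br c d)))"
    using supp_sum by (intro UN_mono) auto
  also have "\<dots> \<subseteq> (\<Union>c\<in>supp v. \<Union>d\<in>supp w. supp (basic_br c d))"
    using supp_scal by (intro UN_mono) auto
  also have "\<dots> \<subseteq> T2" using supp_bb_T2 assms by blast
  finally show ?thesis .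
qed

lemma h_FS_T2: "x \<in> lie_gen (SG m) \<Longrightarrow> FS x \<and> supp x \<subseteq> T2"
proof (induction rule: lie_gen_induct)
  case (gen v)
  then obtain t where "v = basis (Tr t)" "2 \<le> leaves t" by blast
  moreover have "t \<noteq> Lf" using \<open>2 \<le> leaves t\<close> by auto
  ultimately show ?case unfolding T2_def by auto
next
  case zero then show ?case by (simp add: supp_def)
next
  case (add v w) then show ?case using supp_add[of v w] FS_add by blast
next
  case (smult v a) then show ?case using supp_scal[of a v] FS_scal by blast
next
  case (bracket v w) then show ?case using supp_br_T2 FS_br by blast
qed

lemma degv_basis: "degv (basis c) = scal (deg c) (basis c)"
  by (simp add: fun_eq_iff degv_apply basis_apply)

lemma h_degv: "x \<in> lie_gen (SG m) \<Longrightarrow> degv x \<in> lie_gen (SG m)"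
proof (induction rule: lie_gen_induct)
  case (gen v)
  then obtain t where t: "v = basis (Tr t)" by blast
  show ?case unfolding t degv_basis by (intro lie_gen.smult lie_gen.gen) (use gen t in auto)
next
  case zero show ?case by (simp only: degv_zero) (rule lie_gen.zero)
next
  case (add v w) show ?case unfolding degv_add by (rule lie_gen.add) (fact add.IH)+
next
  case (smult v a) show ?case unfolding degv_scal by (rule lie_gen.smult) (fact smult.IH)
next
  case (bracket v w)
  have "FS v" "FS w" using h_FS_T2 bracket.hyps by blast+
  then have eq: "degv (br v w) = br (degv v) w + br v (degv w)" by (rule degv_br)
  show ?case unfolding eq by (intro lie_gen.add lie_gen.bracket bracket.IH bracket.hyps)
qed

definition PP :: "nat \<Rightarrow> vec \<Rightarrow> bool" where
  "PP m z \<longleftrightarrow> (\<exists>b y. z = scal b (basis (Tr Lf)) + y \<and> y \<in> lie_gen (SG m))"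

lemma scal_zero_left[simp]: "scal 0 v = 0" by (simp add: scal_def fun_eq_iff)
lemma scal_zero_right[simp]: "scal a 0 = 0" by (simp add: scal_def fun_eq_iff)
lemma scal_add_left: "scal a v + scal b v = scal (a + b) v" by (simp add: scal_def fun_eq_iff algebra_simps)
lemma scal_add_right: "scal a (v + w) = scal a v + scal a w" by (simp add: scal_def fun_eq_iff algebra_simps)

lemma PP_zero: "PP m 0" unfolding PP_def by (rule exI[of _ 0], rule exI[of _ 0]) (simp add: lie_gen.zero)

lemma PP_add: "PP m z \<Longrightarrow> PP m z' \<Longrightarrow> PP m (z + z')"
  unfolding PP_def
proof (elim exE conjE)
  fix b y b' y' assume "z = scal b (basis (Tr Lf)) + y" "y \<in> lie_gen (SG m)" "z' = scal b' (basis (Tr Lf)) + y'" "y' \<in> lie_gen (SG m)"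
  then show "\<exists>b y. z + z' = scal b (basis (Tr Lf)) + y \<and> y \<in> lie_gen (SG m)"
    by (intro exI[of _ "b + b'"] exI[of _ "y + y'"]) (simp add: lie_gen.add scal_add_left[symmetric] algebra_simps)
qed

lemma PP_scal: "PP m z \<Longrightarrow> PP m (scal a z)"
  unfolding PP_def
proof (elim exE conjE)
  fix b y assume "z = scal b (basis (Tr Lf)) + y" "y \<in> lie_gen (SG m)"
  then show "\<exists>b y. scal a z = scal b (basis (Tr Lf)) + y \<and> y \<in> lie_gen (SG m)"
    by (intro exI[of _ "a * b"] exI[of _ "scal a y"]) (simp add: lie_gen.smult scal_add_right scal_mult)
qed

lemma PP_sum: "(\<And>i. i \<in> I \<Longrightarrow> PP m (f i)) \<Longrightarrow> PP m (\<Sum>i\<in>I. f i)"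
proof (induction I rule: infinite_finite_induct)
  case (insert i F)
  have "PP m (f i + sum f F)" using insert by (intro PP_add) auto
  then show ?case by (simp only: sum.insert[OF insert(1,2)])
qed (simp_all add: PP_zero)

lemma PP_h: "y \<in> lie_gen (SG m) \<Longrightarrow> PP m y"
  unfolding PP_def by (rule exI[of _ 0], rule exI[of _ y]) simp

lemma h_C: assumes "x \<in> lie_gen (SG m)" shows "PP m (br (basis Circ) x)"
  using assms
proof (induction rule: lie_gen_induct)
  case (gen v)
  then obtain t where t: "v = basis (Tr t)" "2 \<le> leaves t" "leaves t \<le> m" by blast
  have ne: "t \<noteq> Lf" using t by auto
  have "br (basis Circ) v = (\<Sum>u\<in>{1..leaves t}. basis (Tr (erase t u)))"
    unfolding t(1) br_basis bb_C[OF ne] ..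
  moreover have "PP m \<dots>"
  proof (rule PP_sum)
    fix u assume u: "u \<in> {1..leaves t}"
    have l: "leaves (erase t u) = leaves t - 1" using leaves_erase[OF ne, of u] u by auto
    show "PP m (basis (Tr (erase t u)))"
    proof (cases "erase t u = Lf")
      case True
      then show ?thesis unfolding PP_def
        by (intro exI[of _ 1] exI[of _ 0]) (simp add: lie_gen.zero)
    next
      case False
      then have "2 \<le> leaves (erase t u)" by (rule leaves_ge2)
      then have "basis (Tr (erase t u)) \<in> SG m" using l t by auto
      then show ?thesis by (intro PP_h lie_gen.gen)
    qed
  qed
  ultimately show ?case by simp
next
  case zero show ?case by (simp only: br_zero_right) (rule PP_zero)
next
  case (add v w)
  have "FS v" "FS w" using h_FS_T2 add.hyps by blast+
  then have eq: "br (basis Circ) (v + w) = br (basis Circ) v + br (basis Circ) w" by (intro br_add_right) simp_all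
  show ?case unfolding eq by (intro PP_add add.IH)
next
  case (smult v a)
  have "FS v" using h_FS_T2 smult.hyps by blast
  then have eq: "br (basis Circ) (scal a v) = scal a (br (basis Circ) v)" by (intro br_scal_right) simp_all
  show ?case unfolding eq by (intro PP_scal smult.IH)
next
  case (bracket v w)
  have fv: "FS v" "supp v \<subseteq> T2" and fw: "FS w" "supp w \<subseteq> T2" using h_FS_T2 bracket.hyps by blast+
  have D: "br (basis Circ) (br v w) = br (br (basis Circ) v) w + br v (br (basis Circ) w)"
    by (rule br_C_deriv) (use fv fw in auto)
  obtain b y where bv: "br (basis Circ) v = scal b (basis (Tr Lf)) + y" "y \<in> lie_gen (SG m)"
    using bracket.IH(1) unfolding PP_def by blast
  obtain b' y' where bv': "br (basis Circ) w = scal b' (basis (Tr Lf)) + y'" "y' \<in> lie_gen (SG m)"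
    using bracket.IH(2) unfolding PP_def by blast
  have fy: "FS y" "FS y'" using h_FS_T2 bv(2) bv'(2) by blast+
  have 1: "br (br (basis Circ) v) w = scal b (degv w) + br y w"
    unfolding bv(1) using fy fw by (simp add: br_add_left FS_scal br_scal_left br_L)
  have 2: "br v (br (basis Circ) w) = scal b' (scal (-1) (degv v)) + br v y'"
    unfolding bv'(1) using fy fv
    by (simp add: br_add_right FS_scal br_scal_right br_antisym[of v "basis (Tr Lf)"] br_L)
  have "br (basis Circ) (br v w) \<in> lie_gen (SG m)"
    unfolding D 1 2 by (intro lie_gen.add lie_gen.smult lie_gen.bracket h_degv bracket.hyps bv(2) bv'(2))
  then show ?case by (rule PP_h)
qed




abbreviation VV :: "nat \<Rightarrow> vec set" where
  "VV m \<equiv> {scal a (basis Circ) + scal b (basis (Tr Lf)) + x | a b x. x \<in> h m}"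

lemma VV_I: "x \<in> lie_gen (SG m) \<Longrightarrow> u = scal a (basis Circ) + scal b (basis (Tr Lf)) + x \<Longrightarrow> u \<in> VV m"
  unfolding h_def by blast

lemma VV_E: assumes "u \<in> VV m"
  obtains a b x where "u = scal a (basis Circ) + scal b (basis (Tr Lf)) + x" "x \<in> lie_gen (SG m)"
  using assms unfolding h_def by blast

lemma VV_h: "x \<in> lie_gen (SG m) \<Longrightarrow> x \<in> VV m"
  by (rule VV_I[where a = 0 and b = 0]) simp_all

lemma VV_add: assumes "u \<in> VV m" "u' \<in> VV m" shows "u + u' \<in> VV m"
proof -
  obtain a b x where 1: "u = scal a (basis Circ) + scal b (basis (Tr Lf)) + x" "x \<in> lie_gen (SG m)" using assms(1) by (rule VV_E)
  obtain a' b' x' where 2: "u' = scal a' (basis Circ) + scal b' (basis (Tr Lf)) + x'" "x' \<in> lie_gen (SG m)" using assms(2) by (rule VV_E)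
  show ?thesis
    by (rule VV_I[where a = "a + a'" and b = "b + b'" and x = "x + x'"])
       (use 1 2 in \<open>simp_all add: lie_gen.add fun_eq_iff algebra_simps\<close>)
qed

lemma VV_scal: assumes "u \<in> VV m" shows "scal c u \<in> VV m"
proof -
  obtain a b x where 1: "u = scal a (basis Circ) + scal b (basis (Tr Lf)) + x" "x \<in> lie_gen (SG m)" using assms(1) by (rule VV_E)
  show ?thesis
    by (rule VV_I[where a = "c * a" and b = "c * b" and x = "scal c x"])
       (use 1 in \<open>simp_all add: lie_gen.smult fun_eq_iff algebra_simps\<close>)
qed

lemma VV_zero: "0 \<in> VV m" by (rule VV_h) (rule lie_gen.zero)

lemma VV_C: "scal a (basis Circ) \<in> VV m"
  by (rule VV_I[where a = a and b = 0 and x = 0]) (simp_all add: lie_gen.zero)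

lemma VV_PP: "PP m z \<Longrightarrow> z \<in> VV m"
  unfolding PP_def by (elim exE conjE) (rule VV_I[where a = 0], assumption, simp)

lemma VV_FS: assumes "u \<in> VV m" shows "FS u"
proof -
  obtain a b x where 1: "u = scal a (basis Circ) + scal b (basis (Tr Lf)) + x" "x \<in> lie_gen (SG m)" using assms(1) by (rule VV_E)
  have "FS x" using h_FS_T2 1(2) by blast
  then show ?thesis unfolding 1(1) by (intro FS_add FS_scal) simp_all
qed

lemma br_VV_right:
  assumes fe: "FS e" and C: "br e (basis Circ) \<in> VV m" and L: "br e (basis (Tr Lf)) \<in> VV m"
    and X: "\<And>x. x \<in> lie_gen (SG m) \<Longrightarrow> br e x \<in> VV m" and w: "w \<in> VV m"
  shows "br e w \<in> VV m"
proof -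
  obtain a b x where 1: "w = scal a (basis Circ) + scal b (basis (Tr Lf)) + x" "x \<in> lie_gen (SG m)" using w by (rule VV_E)
  have fx: "FS x" using h_FS_T2 1(2) by blast
  have "br e w = scal a (br e (basis Circ)) + scal b (br e (basis (Tr Lf))) + br e x"
    unfolding 1(1) using fe fx
    by (simp add: br_add_right FS_add FS_scal br_scal_right)
  also have "\<dots> \<in> VV m" using C L X[OF 1(2)] by (intro VV_add VV_scal)
  finally show ?thesis .
qed

lemma deg_Circ: "deg Circ = -1" by (simp add: deg_def)
lemma deg_L: "deg (Tr Lf) = 0" by (simp add: deg_def)

lemma br_CC: "br (basis Circ) (basis Circ) = 0"
  by (simp add: br_basis basic_br_def)

lemma br_CL: "br (basis Circ) (basis (Tr Lf)) = basis Circ"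
  by (simp add: br_basis basic_br_def)

lemma br_Lv: "br (basis (Tr Lf)) (basis c) = scal (deg c) (basis c)"
  by (simp add: br_L degv_basis)

lemma brC_VV: "w \<in> VV m \<Longrightarrow> br (basis Circ) w \<in> VV m"
proof (rule br_VV_right)
  show "br (basis Circ) (basis Circ) \<in> VV m" unfolding br_CC by (rule VV_zero)
  show "br (basis Circ) (basis (Tr Lf)) \<in> VV m" unfolding br_CL using VV_C[of 1 m] by simp
  show "br (basis Circ) x \<in> VV m" if "x \<in> lie_gen (SG m)" for x using h_C[OF that] by (rule VV_PP)
qed simp_all

lemma brL_VV: "w \<in> VV m \<Longrightarrow> br (basis (Tr Lf)) w \<in> VV m"
proof (rule br_VV_right)
  show "br (basis (Tr Lf)) (basis Circ) \<in> VV m" unfolding br_Lv by (rule VV_C)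
  show "br (basis (Tr Lf)) (basis (Tr Lf)) \<in> VV m" unfolding br_Lv deg_L scal_zero_left by (rule VV_zero)
  show "br (basis (Tr Lf)) x \<in> VV m" if "x \<in> lie_gen (SG m)" for x
  proof -
    have "FS x" using h_FS_T2 that by blast
    then show ?thesis unfolding br_L[OF \<open>FS x\<close>] by (intro VV_h h_degv that)
  qed
qed simp_all

lemma brX_VV: assumes x: "x \<in> lie_gen (SG m)" shows "w \<in> VV m \<Longrightarrow> br x w \<in> VV m"
proof (rule br_VV_right)
  have fx: "FS x" using h_FS_T2 x by blast
  then show "FS x" .
  show "br x (basis Circ) \<in> VV m"
    unfolding br_antisym[OF fx FS_basis] by (intro VV_scal VV_PP h_C x)
  show "br x (basis (Tr Lf)) \<in> VV m"
    unfolding br_antisym[OF fx FS_basis] br_L[OF fx] by (intro VV_scal VV_h h_degv x)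
  show "br x x' \<in> VV m" if "x' \<in> lie_gen (SG m)" for x'
    by (intro VV_h lie_gen.bracket x that)
qed

theorem lemma5p4:
  fixes m :: nat
  assumes "2 \<le> m"
  shows "is_lie_subalgebra
           {scal a (basis Circ) + scal b (basis (Tr Lf)) + x | a b x. x \<in> h m}"
  unfolding is_lie_subalgebra_def
proof (intro conjI ballI allI)
  show "FS v" if "v \<in> VV m" for v using that by (rule VV_FS)
  show "0 \<in> VV m" by (rule VV_zero)
  show "v + w \<in> VV m" if "v \<in> VV m" "w \<in> VV m" for v w using that by (rule VV_add)
  show "scal a v \<in> VV m" if "v \<in> VV m" for a v using that by (rule VV_scal)
  show "br v w \<in> VV m" if v: "v \<in> VV m" and w: "w \<in> VV m" for v w
  proof -
    obtain a b x where 1: "v = scal a (basis Circ) + scal b (basis (Tr Lf)) + x" "x \<in> lie_gen (SG m)" using v by (rule VV_E)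
    have fx: "FS x" using h_FS_T2 1(2) by blast
    have fw: "FS w" using w by (rule VV_FS)
    have "br v w = scal a (br (basis Circ) w) + scal b (br (basis (Tr Lf)) w) + br x w"
      unfolding 1(1) using fw fx
      by (simp add: br_add_left FS_add FS_scal br_scal_left)
    also have "\<dots> \<in> VV m" using brC_VV[OF w] brL_VV[OF w] brX_VV[OF 1(2) w] by (intro VV_add VV_scal)
    finally show ?thesis .
  qed
qed


end
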